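(* In the setting below, if $\{\mathbb G(t)\}$ is uniformly strongly connected, then for every fixed $\tau\ge0$, $S(t)\cdots S(\tau+1)S(\tau)\to\frac1n\mathbf 1\,y^\top(\tau)$ as $t\to\infty$, where $y(\tau)=(y_1(\tau),\dots,y_n(\tau))^\top$ and $\mathbf 1$ is the all-ones vector.
   Context: Setting. Fix $n$ agents, $\mathcal V=\{1,\dots,n\}$. For each $t\in\{0,1,2,\dots\}$, $\mathbb G(t)=(\mathcal V,\mathcal E(t))$ is a directed graph containing a self-arc $(i,i)$ at every vertex; $\mathcal N_i(t)=\{j:(j,i)\in\mathcal E(t)\}$ and $\mathcal N_i^-(t)=\{k:(i,k)\in\mathcal E(t)\}$. Weights $w_{ij}(t)$ are positive for $j\in\mathcal N_i(t)$ and $w_{ij}(t)=0$ otherwise, and satisfy: there is $\beta>0$ with $w_{ij}(t)\ge\beta$ whenever $j\in\mathcal N_i(t)$, and $\sum_{j\in\mathcal N_i^-(t)}w_{ji}(t)=1$ for all $i,t$. Thus $W(t)=[w_{ij}(t)]$ is column stochastic with positive diagonal. The sequence $\{\mathbb G(t)\}$ is uniformly strongly connected if there is a positive integer $L$ such that for every $t\ge0$ the directed graph with vertex set $\mathcal V$ and edge set $\bigcup_{k=t}^{t+L-1}\mathcal E(k)$ is strongly connected. The $y$-iteration of push-sum: $y_i(t+1)=\sum_{j}w_{ij}(t)y_j(t)$, $y_i(0)=1$. Define $S(t)$ with entries $s_{ij}(t)=w_{ij}(t)y_j(t)/y_i(t+1)$. *)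

theory Defs
  imports "HOL-Analysis.Analysis"
begin

text \<open>Agents are the elements of a finite type 'n (so n = CARD('n)).
  Weights: w t i j = w_ij(t). Graph edges: E t, a set of arcs (j,i).\<close>

fun push_sum_y :: "(nat \<Rightarrow> 'n::finite \<Rightarrow> 'n \<Rightarrow> real) \<Rightarrow> nat \<Rightarrow> 'n \<Rightarrow> real" where
  "push_sum_y w 0 i = 1"
| "push_sum_y w (Suc t) i = (\<Sum>j\<in>UNIV. w t i j * push_sum_y w t j)"

definition y_vec :: "(nat \<Rightarrow> 'n::finite \<Rightarrow> 'n \<Rightarrow> real) \<Rightarrow> nat \<Rightarrow> real ^ 'n" where
  "y_vec w t = (\<chi> i. push_sum_y w t i)"

definition S_mat :: "(nat \<Rightarrow> 'n::finite \<Rightarrow> 'n \<Rightarrow> real) \<Rightarrow> nat \<Rightarrow> real ^ 'n ^ 'n" where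
  "S_mat w t = (\<chi> i j. w t i j * push_sum_y w t j / push_sum_y w (Suc t) i)"

text \<open>Left product S(t) ... S(tau+1) S(tau) (identity if t < tau).\<close>
definition S_prod :: "(nat \<Rightarrow> 'n::finite \<Rightarrow> 'n \<Rightarrow> real) \<Rightarrow> nat \<Rightarrow> nat \<Rightarrow> real ^ 'n ^ 'n" where
  "S_prod w \<tau> t = fold (\<lambda>k M. S_mat w k ** M) [\<tau>..<Suc t] (mat 1)"

definition strongly_connected :: "('n \<times> 'n) set \<Rightarrow> bool" where
  "strongly_connected A \<longleftrightarrow> (\<forall>i j. (i, j) \<in> A\<^sup>*)"

definition uniformly_strongly_connected :: "(nat \<Rightarrow> ('n \<times> 'n) set) \<Rightarrow> bool" where
  "uniformly_strongly_connected E \<longleftrightarrow>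
     (\<exists>L::nat. L > 0 \<and> (\<forall>t. strongly_connected (\<Union>k\<in>{t..<t+L}. E k)))"

end

theory Submission
  imports Defs
begin


fun prodm :: "(nat \<Rightarrow> 'n::finite \<Rightarrow> 'n \<Rightarrow> real) \<Rightarrow> nat \<Rightarrow> nat \<Rightarrow> 'n \<Rightarrow> 'n \<Rightarrow> real" where
  "prodm A s 0 i j = (if i = j then 1 else 0)"
| "prodm A s (Suc k) i j = (\<Sum>l\<in>UNIV. A (s+k) i l * prodm A s k l j)"

lemma prodm_nonneg:
  assumes "\<And>t i j. 0 \<le> A t i j"
  shows "0 \<le> prodm A s k i j"
  by (induction k arbitrary: i j) (auto intro!: sum_nonneg mult_nonneg_nonneg assms)

lemma prodm_rowsum:
  assumes "\<And>t i. (\<Sum>j\<in>UNIV. A t i j) = 1"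
  shows "(\<Sum>j\<in>UNIV. prodm A s k i j) = 1"
proof (induction k arbitrary: i)
  case 0
  then show ?case by simp
next
  case (Suc k)
  have "(\<Sum>j\<in>UNIV. prodm A s (Suc k) i j) = (\<Sum>l\<in>UNIV. A (s+k) i l * (\<Sum>j\<in>UNIV. prodm A s k l j))"
    unfolding prodm.simps sum_distrib_left
    by (subst sum.swap) (simp add: mult.assoc)
  also have "\<dots> = 1" using Suc assms by simp
  finally show ?case .
qed

lemma prodm_le1:
  assumes "\<And>t i j. 0 \<le> A t i j" "\<And>t i. (\<Sum>j\<in>UNIV. A t i j) = 1"
  shows "prodm A s k i j \<le> 1"
proof -
  have "prodm A s k i j \<le> (\<Sum>j\<in>UNIV. prodm A s k i j)"
    by (rule member_le_sum) (auto intro: prodm_nonneg assms)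
  then show ?thesis using prodm_rowsum[OF assms(2)] by simp
qed

lemma prodm_add:
  "prodm A s (k + K) i j = (\<Sum>l\<in>UNIV. prodm A (s+k) K i l * prodm A s k l j)"
proof (induction K arbitrary: i j)
  case 0
  have "(\<Sum>l\<in>UNIV. (if i = l then 1 else 0) * prodm A s k l j) = prodm A s k i j"
    by (simp add: if_distrib[where f="\<lambda>x. x * _"] cong: if_cong)
  then show ?case by simp
next
  case (Suc K)
  have "prodm A s (k + Suc K) i j = (\<Sum>l\<in>UNIV. A (s+k+K) i l * prodm A s (k+K) l j)"
    by (simp add: add.assoc)
  also have "\<dots> = (\<Sum>l\<in>UNIV. A (s+k+K) i l * (\<Sum>m\<in>UNIV. prodm A (s+k) K l m * prodm A s k m j))"
    using Suc by simp
  also have "\<dots> = (\<Sum>m\<in>UNIV. (\<Sum>l\<in>UNIV. A (s+k+K) i l * prodm A (s+k) K l m) * prodm A s k m j)"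
    unfolding sum_distrib_left sum_distrib_right
    by (subst sum.swap) (simp add: mult.assoc)
  also have "\<dots> = (\<Sum>m\<in>UNIV. prodm A (s+k) (Suc K) i m * prodm A s k m j)"
    by simp
  finally show ?case .
qed

lemma crossing:
  assumes "(x, y) \<in> U\<^sup>*" "x \<in> P" "y \<notin> P"
  shows "\<exists>a b. (a, b) \<in> U \<and> a \<in> P \<and> b \<notin> P"
  using assms by (induction rule: rtrancl_induct) auto

lemma reach:
  fixes A :: "nat \<Rightarrow> 'n::finite \<Rightarrow> 'n \<Rightarrow> real"
  assumes nonneg: "\<And>t i j. 0 \<le> A t i j"
    and edge: "\<And>t i j. (j, i) \<in> E t \<Longrightarrow> \<alpha> \<le> A t i j"
    and self: "\<And>t i. (i, i) \<in> E t"
    and apos: "0 < \<alpha>"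
    and sc: "\<And>t. strongly_connected (\<Union>k\<in>{t..<t+L}. E k)"
  shows "\<alpha> ^ (CARD('n) * L) \<le> prodm A s (CARD('n) * L) i j"
proof -
  define R where "R k = {i. \<alpha> ^ k \<le> prodm A s k i j}" for k
  have step: "b \<in> R (Suc k)" if "a \<in> R k" "(a, b) \<in> E (s+k)" for a b k
  proof -
    have "\<alpha> * \<alpha> ^ k \<le> A (s+k) b a * prodm A s k a j"
      using that edge[of a b "s+k"] apos unfolding R_def
      by (intro mult_mono) (auto intro: nonneg)
    also have "\<dots> \<le> (\<Sum>l\<in>UNIV. A (s+k) b l * prodm A s k l j)"
      by (rule member_le_sum) (auto intro!: mult_nonneg_nonneg nonneg prodm_nonneg)
    finally show ?thesis unfolding R_def by simp
  qed
  have mono: "R k \<subseteq> R (k + d)" for k d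
  proof (induction d)
    case 0 then show ?case by simp
  next
    case (Suc d)
    then show ?case using step[OF _ self] by auto
  qed
  have j0: "j \<in> R k" for k
    using mono[of 0 k] unfolding R_def by auto
  have grow: "\<exists>b. b \<notin> R k \<and> b \<in> R (k + L)" if nU: "R k \<noteq> UNIV" for k
  proof -
    obtain b0 where b0: "b0 \<notin> R k" using nU by blast
    have "(j, b0) \<in> (\<Union>t\<in>{s+k..<s+k+L}. E t)\<^sup>*"
      using sc[of "s+k"] unfolding strongly_connected_def by blast
    from crossing[OF this j0 b0] obtain a b where
      ab0: "(a, b) \<in> (\<Union>t\<in>{s+k..<s+k+L}. E t)" "a \<in> R k" "b \<notin> R k" by blast
    from ab0(1) obtain t where t0: "t \<in> {s+k..<s+k+L}" "(a, b) \<in> E t" by blast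
    have ab: "a \<in> R k" "b \<notin> R k" "(a, b) \<in> E t" "s+k \<le> t" "t < s+k+L"
      using ab0 t0 by auto
    define d where "d = t - (s+k)"
    have t: "t = s + (k + d)" "d < L" using ab unfolding d_def by auto
    have "a \<in> R (k+d)" using mono ab by blast
    then have "b \<in> R (Suc (k+d))" using step ab t by simp
    then have "b \<in> R (k+L)" using mono[of "Suc (k+d)" "L - Suc d"] t by auto
    then show ?thesis using ab by blast
  qed
  have card: "min (Suc m) CARD('n) \<le> card (R (m * L))" for m
  proof (induction m)
    case 0
    have "card {j} \<le> card (R 0)" using j0 by (intro card_mono) auto
    then show ?case by simp
  next
    case (Suc m)
    show ?case
    proof (cases "R (m*L) = UNIV")
      case True
      then have "R (Suc m * L) = UNIV" using mono[of "m*L" L] by (auto simp: add.commute)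
      then show ?thesis by simp
    next
      case False
      then obtain b where b: "b \<notin> R (m*L)" "b \<in> R (m*L + L)" using grow by blast
      have "R (m*L) \<subset> R (m*L+L)" using mono b by blast
      then have "card (R (m*L)) < card (R (m*L+L))" by (intro psubset_card_mono) auto
      then show ?thesis using Suc by (simp add: add.commute)
    qed
  qed
  have "CARD('n) \<le> card (R (CARD('n) * L))" using card[of "CARD('n)"] by simp
  then have "R (CARD('n) * L) = UNIV"
    by (intro card_seteq) auto
  then show ?thesis unfolding R_def by auto
qed



lemma contract:
  fixes Q :: "'n::finite \<Rightarrow> 'n \<Rightarrow> real" and x :: "'n \<Rightarrow> real"
  assumes Qg: "\<And>i l. \<gamma> \<le> Q i l" and Qn: "\<And>i l. 0 \<le> Q i l"
    and Qs: "\<And>i. (\<Sum>l\<in>UNIV. Q i l) = 1"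
    and xb: "\<And>a. m \<le> x a \<and> x a \<le> m + d"
  shows "\<exists>m'. \<forall>i. m' \<le> (\<Sum>l\<in>UNIV. Q i l * x l) \<and> (\<Sum>l\<in>UNIV. Q i l * x l) \<le> m' + (1 - \<gamma>) * d"
proof -
  define j0 :: 'n where "j0 = undefined"
  have "\<gamma> * x j0 + (1 - \<gamma>) * m \<le> (\<Sum>l\<in>UNIV. Q i l * x l) \<and>
        (\<Sum>l\<in>UNIV. Q i l * x l) \<le> \<gamma> * x j0 + (1 - \<gamma>) * m + (1 - \<gamma>) * d" for i
  proof
    have e1: "(\<Sum>l\<in>UNIV. Q i l * x l) = m + (\<Sum>l\<in>UNIV. Q i l * (x l - m))"
      using Qs[of i] by (simp add: right_diff_distrib sum_subtractf sum_distrib_right[symmetric])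
    have "Q i j0 * (x j0 - m) \<le> (\<Sum>l\<in>UNIV. Q i l * (x l - m))"
      by (rule member_le_sum) (auto intro!: mult_nonneg_nonneg Qn simp: xb)
    moreover have "\<gamma> * (x j0 - m) \<le> Q i j0 * (x j0 - m)"
      by (rule mult_right_mono) (auto simp: Qg xb)
    ultimately show "\<gamma> * x j0 + (1 - \<gamma>) * m \<le> (\<Sum>l\<in>UNIV. Q i l * x l)"
      using e1 by (simp add: algebra_simps)
    have e2: "(\<Sum>l\<in>UNIV. Q i l * x l) = (m + d) - (\<Sum>l\<in>UNIV. Q i l * ((m + d) - x l))"
      using Qs[of i] by (simp add: right_diff_distrib sum_subtractf sum_distrib_right[symmetric])
    have "Q i j0 * ((m + d) - x j0) \<le> (\<Sum>l\<in>UNIV. Q i l * ((m + d) - x l))"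
      by (rule member_le_sum) (auto intro!: mult_nonneg_nonneg Qn simp: xb)
    moreover have "\<gamma> * ((m + d) - x j0) \<le> Q i j0 * ((m + d) - x j0)"
      by (rule mult_right_mono) (auto simp: Qg xb)
    ultimately show "(\<Sum>l\<in>UNIV. Q i l * x l) \<le> \<gamma> * x j0 + (1 - \<gamma>) * m + (1 - \<gamma>) * d"
      using e2 by (simp add: algebra_simps)
  qed
  then show ?thesis by blast
qed

lemma convex_in:
  fixes p x :: "'n::finite \<Rightarrow> real"
  assumes "\<And>i. 0 \<le> p i" "(\<Sum>i\<in>UNIV. p i) = 1" "\<And>a. m \<le> x a \<and> x a \<le> m + d"
  shows "m \<le> (\<Sum>i\<in>UNIV. p i * x i) \<and> (\<Sum>i\<in>UNIV. p i * x i) \<le> m + d"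
proof
  have "(\<Sum>i\<in>UNIV. p i * m) \<le> (\<Sum>i\<in>UNIV. p i * x i)"
    using assms by (intro sum_mono mult_left_mono) auto
  then show "m \<le> (\<Sum>i\<in>UNIV. p i * x i)" using assms(2) by (simp add: sum_distrib_right[symmetric])
  have "(\<Sum>i\<in>UNIV. p i * x i) \<le> (\<Sum>i\<in>UNIV. p i * (m + d))"
    using assms by (intro sum_mono mult_left_mono) auto
  then show "(\<Sum>i\<in>UNIV. p i * x i) \<le> m + d" using assms(2) by (simp add: sum_distrib_right[symmetric])
qed

lemma fold_prodm:
  "fold (\<lambda>k M. S_mat w k ** M) [s..<s+k] (mat 1) $ i $ j =
   prodm (\<lambda>t i j. w t i j * push_sum_y w t j / push_sum_y w (Suc t) i) s k i j"
proof (induction k arbitrary: i j)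
  case 0
  then show ?case by (simp add: mat_def)
next
  case (Suc k)
  have "[s..<s + Suc k] = [s..<s+k] @ [s+k]" by simp
  then show ?case using Suc
    by (simp add: matrix_matrix_mult_def S_mat_def)
qed



theorem lemma4:
  fixes E :: "nat \<Rightarrow> ('n::finite \<times> 'n) set"
    and w :: "nat \<Rightarrow> 'n \<Rightarrow> 'n \<Rightarrow> real"
    and \<beta> :: real
    and \<tau> :: nat
  assumes self_arcs: "\<And>t i. (i, i) \<in> E t"
    and w_pos: "\<And>t i j. (j, i) \<in> E t \<Longrightarrow> w t i j > 0"
    and w_zero: "\<And>t i j. (j, i) \<notin> E t \<Longrightarrow> w t i j = 0"
    and beta_pos: "\<beta> > 0"
    and w_beta: "\<And>t i j. (j, i) \<in> E t \<Longrightarrow> w t i j \<ge> \<beta>"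
    and col_stoch: "\<And>t i. (\<Sum>j\<in>{k. (i, k) \<in> E t}. w t j i) = 1"
    and usc: "uniformly_strongly_connected E"
  shows "(\<lambda>t. S_prod w \<tau> t) \<longlonglongrightarrow>
           (1 / real CARD('n)) *\<^sub>R (\<chi> i j. y_vec w \<tau> $ j)"
proof -
  define n where "n = real CARD('n)"
  have n1: "1 \<le> n" unfolding n_def by simp
  define y where "y = push_sum_y w"
  obtain L where L: "L > 0" "\<And>t. strongly_connected (\<Union>k\<in>{t..<t+L}. E k)"
    using usc unfolding uniformly_strongly_connected_def by blast
  define K where "K = CARD('n) * L"
  have K0: "K > 0" unfolding K_def using L by simp
  have wnn: "0 \<le> w t i j" for t i j
    using w_pos[of j i t] w_zero[of j i t] by (cases "(j, i) \<in> E t") auto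
  have colsum: "(\<Sum>j\<in>UNIV. w t j i) = 1" for t i
  proof -
    have "(\<Sum>j\<in>UNIV. w t j i) = (\<Sum>j\<in>{k. (i, k) \<in> E t}. w t j i)"
      by (rule sum.mono_neutral_right) (auto simp: w_zero)
    then show ?thesis using col_stoch by simp
  qed
  have b1: "\<beta> \<le> 1"
  proof -
    have "\<beta> \<le> w 0 undefined undefined" using w_beta self_arcs by blast
    also have "\<dots> \<le> (\<Sum>j\<in>UNIV. w 0 j undefined)"
      by (rule member_le_sum) (auto simp: wnn)
    finally show ?thesis using colsum by simp
  qed
  have ynn: "0 \<le> y t i" for t i
    unfolding y_def by (induction t arbitrary: i) (auto intro!: sum_nonneg mult_nonneg_nonneg wnn)
  have ysum: "(\<Sum>i\<in>UNIV. y t i) = n" for t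
  proof (induction t)
    case 0 then show ?case by (simp add: y_def n_def)
  next
    case (Suc t)
    have "(\<Sum>i\<in>UNIV. y (Suc t) i) = (\<Sum>i\<in>UNIV. \<Sum>j\<in>UNIV. w t i j * y t j)"
      by (simp add: y_def)
    also have "\<dots> = (\<Sum>j\<in>UNIV. \<Sum>i\<in>UNIV. w t i j * y t j)"
      by (rule sum.swap)
    also have "\<dots> = (\<Sum>j\<in>UNIV. (\<Sum>i\<in>UNIV. w t i j) * y t j)"
      by (simp add: sum_distrib_right)
    also have "\<dots> = n" using colsum Suc by simp
    finally show ?case .
  qed
  have yle: "y t i \<le> n" for t i
  proof -
    have "y t i \<le> (\<Sum>i\<in>UNIV. y t i)" by (rule member_le_sum) (auto simp: ynn)
    then show ?thesis using ysum by simp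
  qed
  have yprod: "y (s+k) i = (\<Sum>j\<in>UNIV. prodm w s k i j * y s j)" for s k i
  proof (induction k arbitrary: i)
    case 0
    have "(\<Sum>j\<in>UNIV. (if i = j then 1 else 0) * y s j) = y s i"
      by (simp add: if_distrib[where f="\<lambda>x. x * _"] cong: if_cong)
    then show ?case by simp
  next
    case (Suc k)
    have "y (s + Suc k) i = (\<Sum>l\<in>UNIV. w (s+k) i l * y (s+k) l)" by (simp add: y_def)
    also have "\<dots> = (\<Sum>l\<in>UNIV. w (s+k) i l * (\<Sum>j\<in>UNIV. prodm w s k l j * y s j))"
      using Suc by simp
    also have "\<dots> = (\<Sum>j\<in>UNIV. (\<Sum>l\<in>UNIV. w (s+k) i l * prodm w s k l j) * y s j)"
      unfolding sum_distrib_left sum_distrib_right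
      by (subst sum.swap) (simp add: mult.assoc)
    also have "\<dots> = (\<Sum>j\<in>UNIV. prodm w s (Suc k) i j * y s j)" by simp
    finally show ?case .
  qed
  define \<delta> where "\<delta> = \<beta> ^ K"
  have d0: "0 < \<delta>" unfolding \<delta>_def using beta_pos by simp
  have d1: "\<delta> \<le> 1" unfolding \<delta>_def using beta_pos b1 by (simp add: power_le_one)
  have ypow: "\<beta> ^ t \<le> y t i" for t i
  proof (induction t arbitrary: i)
    case 0 then show ?case by (simp add: y_def)
  next
    case (Suc t)
    have "\<beta> * \<beta> ^ t \<le> w t i i * y t i"
      using Suc w_beta[OF self_arcs] beta_pos by (intro mult_mono) (auto simp: wnn)
    also have "\<dots> \<le> (\<Sum>j\<in>UNIV. w t i j * y t j)"
      by (rule member_le_sum) (auto intro!: mult_nonneg_nonneg wnn ynn)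
    finally show ?case by (simp add: y_def)
  qed
  have ylow: "\<delta> \<le> y t i" for t i
  proof (cases "K \<le> t")
    case True
    define s where "s = t - K"
    have t: "t = s + K" using True unfolding s_def by simp
    have "(\<Sum>j\<in>UNIV. \<delta> * y s j) \<le> (\<Sum>j\<in>UNIV. prodm w s K i j * y s j)"
      unfolding \<delta>_def K_def
      by (intro sum_mono mult_right_mono reach[where E=E and L=L]) (auto simp: wnn ynn w_beta self_arcs beta_pos L)
    also have "\<dots> = y t i" using yprod t by simp
    finally have "\<delta> * n \<le> y t i" using ysum by (simp add: sum_distrib_left[symmetric])
    moreover have "\<delta> \<le> \<delta> * n" using n1 d0 by simp
    ultimately show ?thesis by linarith
  next
    case False
    have "\<delta> \<le> \<beta> ^ t" unfolding \<delta>_def using False beta_pos b1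
      by (intro power_decreasing) auto
    then show ?thesis using ypow[of t i] by linarith
  qed
  have ypos: "0 < y t i" for t i using ylow[of t i] d0 by linarith
  define Sf where "Sf = (\<lambda>t i j. w t i j * y t j / y (Suc t) i)"
  have Snn: "0 \<le> Sf t i j" for t i j
    unfolding Sf_def using wnn ynn by simp
  have Ssum: "(\<Sum>j\<in>UNIV. Sf t i j) = 1" for t i
  proof -
    have "(\<Sum>j\<in>UNIV. Sf t i j) = (\<Sum>j\<in>UNIV. w t i j * y t j) / y (Suc t) i"
      unfolding Sf_def by (simp add: sum_divide_distrib)
    also have "\<dots> = 1" using ypos[of "Suc t" i] by (simp add: y_def)
    finally show ?thesis .
  qed
  define \<alpha> where "\<alpha> = \<beta> * \<delta> / n"
  have a0: "0 < \<alpha>" unfolding \<alpha>_def using beta_pos d0 n1 by simp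
  have a1: "\<alpha> \<le> 1"
  proof -
    have "\<beta> * \<delta> \<le> 1 * 1" using b1 d1 beta_pos d0 by (intro mult_mono) auto
    also have "\<dots> \<le> n" using n1 by simp
    finally show ?thesis unfolding \<alpha>_def using n1 by simp
  qed
  have Sedge: "\<alpha> \<le> Sf t i j" if "(j, i) \<in> E t" for t i j
  proof -
    have "\<beta> * \<delta> \<le> w t i j * y t j"
      using w_beta[OF that] ylow beta_pos d0 by (intro mult_mono) (auto)
    moreover have "0 \<le> w t i j * y t j" using wnn ynn by simp
    ultimately have "\<beta> * \<delta> / n \<le> w t i j * y t j / n" using n1 by (simp add: divide_right_mono)
    also have "\<dots> \<le> w t i j * y t j / y (Suc t) i"
      using yle ypos \<open>0 \<le> w t i j * y t j\<close> n1 by (intro divide_left_mono) (auto intro!: mult_pos_pos)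
    finally show ?thesis unfolding \<alpha>_def Sf_def .
  qed
  define \<gamma> where "\<gamma> = \<alpha> ^ K"
  have g0: "0 < \<gamma>" unfolding \<gamma>_def using a0 by simp
  have g1: "\<gamma> \<le> 1" unfolding \<gamma>_def using a0 a1 by (simp add: power_le_one)
  have Pg: "\<gamma> \<le> prodm Sf s K i j" for s i j
    unfolding \<gamma>_def K_def
    by (rule reach[where E=E and L=L]) (auto simp: Snn Sedge self_arcs a0 L)
  define P where "P = prodm Sf \<tau>"
  have inv: "\<exists>m. \<forall>a. m \<le> P (k + q * K) a j \<and> P (k + q * K) a j \<le> m + (1 - \<gamma>) ^ q" for k q j
  proof (induction q)
    case 0
    have "\<forall>a. 0 \<le> P k a j \<and> P k a j \<le> 0 + (1 - \<gamma>) ^ 0"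
      unfolding P_def using prodm_nonneg[of Sf, OF Snn] prodm_le1[of Sf, OF Snn Ssum] by simp
    then show ?case by auto
  next
    case (Suc q)
    then obtain m where m: "\<And>a. m \<le> P (k + q * K) a j \<and> P (k + q * K) a j \<le> m + (1 - \<gamma>) ^ q"
      by blast
    have eq: "P (k + Suc q * K) a j = (\<Sum>l\<in>UNIV. prodm Sf (\<tau> + (k + q*K)) K a l * P (k + q * K) l j)" for a
      unfolding P_def using prodm_add[of Sf \<tau> "k + q*K" K a j] by (simp add: algebra_simps)
    have "\<exists>m'. \<forall>a. m' \<le> (\<Sum>l\<in>UNIV. prodm Sf (\<tau> + (k + q*K)) K a l * P (k + q * K) l j) \<and>
       (\<Sum>l\<in>UNIV. prodm Sf (\<tau> + (k + q*K)) K a l * P (k + q * K) l j) \<le> m' + (1 - \<gamma>) * (1 - \<gamma>) ^ q"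
      by (rule contract[where m=m]) (auto simp: Pg prodm_nonneg[of Sf, OF Snn] prodm_rowsum[of Sf, OF Ssum] m)
    then show ?case unfolding eq by simp
  qed
  have ySf: "(\<Sum>i\<in>UNIV. y (Suc t) i * Sf t i l) = y t l" for t l
  proof -
    have "(\<Sum>i\<in>UNIV. y (Suc t) i * Sf t i l) = (\<Sum>i\<in>UNIV. w t i l * y t l)"
      unfolding Sf_def using ypos by (intro sum.cong) (auto simp: field_simps less_imp_neq[symmetric])
    also have "\<dots> = y t l" using colsum by (simp add: sum_distrib_right[symmetric])
    finally show ?thesis .
  qed
  have yP: "(\<Sum>i\<in>UNIV. y (\<tau> + k) i * P k i j) = y \<tau> j" for k j
  proof (induction k)
    case 0
    have "(\<Sum>i\<in>UNIV. y \<tau> i * (if i = j then 1 else 0)) = y \<tau> j"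
      by (simp add: if_distrib[where f="\<lambda>x. _ * x"] cong: if_cong)
    then show ?case by (simp add: P_def)
  next
    case (Suc k)
    have "(\<Sum>i\<in>UNIV. y (\<tau> + Suc k) i * P (Suc k) i j)
        = (\<Sum>i\<in>UNIV. y (Suc (\<tau> + k)) i * (\<Sum>l\<in>UNIV. Sf (\<tau>+k) i l * P k l j))"
      by (simp add: P_def)
    also have "\<dots> = (\<Sum>l\<in>UNIV. (\<Sum>i\<in>UNIV. y (Suc (\<tau> + k)) i * Sf (\<tau>+k) i l) * P k l j)"
      unfolding sum_distrib_left sum_distrib_right
      by (subst sum.swap) (simp add: mult.assoc)
    also have "\<dots> = y \<tau> j" using ySf Suc by simp
    finally show ?case .
  qed
  have bound: "\<bar>P k i j - y \<tau> j / n\<bar> \<le> (1 - \<gamma>) ^ (k div K)" for k i j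
  proof -
    define k0 where "k0 = k mod K"
    define q where "q = k div K"
    have kq: "k = k0 + q * K" unfolding k0_def q_def by simp
    obtain m where m: "\<And>a. m \<le> P k a j \<and> P k a j \<le> m + (1 - \<gamma>) ^ q"
      using inv[of k0 q j] kq by auto
    have c: "m \<le> (\<Sum>i\<in>UNIV. (y (\<tau>+k) i / n) * P k i j) \<and> (\<Sum>i\<in>UNIV. (y (\<tau>+k) i / n) * P k i j) \<le> m + (1 - \<gamma>) ^ q"
      by (rule convex_in) (use n1 in \<open>auto simp: ynn ysum sum_divide_distrib[symmetric] m intro!: divide_nonneg_nonneg\<close>)
    have "(\<Sum>i\<in>UNIV. (y (\<tau>+k) i / n) * P k i j) = y \<tau> j / n"
      using yP[of k j] by (simp add: sum_divide_distrib[symmetric])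
    then show ?thesis using c m[of i] unfolding q_def by (simp add: abs_le_iff)
  qed
  define v :: "real^'n^'n" where "v = (1 / real CARD('n)) *\<^sub>R (\<chi> i j. y_vec w \<tau> $ j)"
  have v: "v $ i $ j = y \<tau> j / n" for i j
    unfolding v_def n_def y_vec_def y_def by simp
  have sp: "S_prod w \<tau> t $ i $ j = P (Suc t - \<tau>) i j" if "\<tau> \<le> t" for t i j
  proof -
    have e: "\<tau> + (Suc t - \<tau>) = Suc t" using that by simp
    have "fold (\<lambda>k M. S_mat w k ** M) [\<tau>..<\<tau> + (Suc t - \<tau>)] (mat 1) $ i $ j =
      prodm (\<lambda>t i j. w t i j * push_sum_y w t j / push_sum_y w (Suc t) i) \<tau> (Suc t - \<tau>) i j"
      by (rule fold_prodm)
    then show ?thesis unfolding S_prod_def P_def Sf_def y_def e .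
  qed
  define h where "h t = (Suc t - \<tau>) div K" for t
  have hlim: "filterlim h at_top sequentially"
    unfolding filterlim_at_top eventually_sequentially
  proof
    fix Z
    show "\<exists>N. \<forall>t\<ge>N. Z \<le> h t"
    proof (intro exI allI impI)
      fix t assume "Z * K + \<tau> \<le> t"
      then have "Z * K \<le> Suc t - \<tau>" by simp
      then have "Z * K div K \<le> h t" unfolding h_def by (rule div_le_mono)
      then show "Z \<le> h t" using K0 by simp
    qed
  qed
  have glim: "(\<lambda>t. (1 - \<gamma>) ^ h t) \<longlonglongrightarrow> 0"
    using filterlim_compose[OF LIMSEQ_power_zero[of "1 - \<gamma>"] hlim] g0 g1 by simp
  have comp: "(\<lambda>t. S_prod w \<tau> t $ i $ j) \<longlonglongrightarrow> v $ i $ j" for i j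
  proof (rule LIM_zero_cancel, rule Lim_null_comparison[OF _ glim])
    show "\<forall>\<^sub>F t in sequentially. norm (S_prod w \<tau> t $ i $ j - v $ i $ j) \<le> (1 - \<gamma>) ^ h t"
      unfolding eventually_sequentially
      using sp bound v unfolding h_def by (intro exI[of _ \<tau>]) auto
  qed
  show ?thesis
    unfolding v_def[symmetric]
    by (intro vec_tendstoI comp)
qed

end
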